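(* Let $q\in(0,1)$, $\alpha\in(-1,1)$ and $\beta<1$ real. If $\beta\le\alpha$, then the discrete part $\mu_d$ of the orthogonality measure $\mu$ of the polynomials $p_n^{(\alpha,\beta)}(\cdot;q)$ vanishes.
   Context: The monic polynomials $p_n=p_n^{(\alpha,\beta)}(x;q)$ satisfy $p_{-1}=0$, $p_0=1$, $p_{n+1}(x)=xp_n(x)-\tilde\gamma_{n-1}\tilde\gamma_np_{n-1}(x)$ for $n\in\mathbb{N}_0$, where $\tilde\gamma_n=(1-\alpha q^n)/(1-\beta q^n)$. $\mu$ is the Borel probability measure on $\mathbb{R}$ with $\int p_mp_n\,{\rm d}\mu=\delta_{m,n}\prod_{j=0}^{n-1}\tilde\gamma_j\tilde\gamma_{j+1}$, and $\mu_d$ is its discrete (atomic) part. *)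

theory Defs
  imports "HOL-Probability.Probability"
begin

definition gt :: "real \<Rightarrow> real \<Rightarrow> real \<Rightarrow> nat \<Rightarrow> real" where
  "gt \<alpha> \<beta> q n = (1 - \<alpha> * q ^ n) / (1 - \<beta> * q ^ n)"

text \<open>Monic polynomials p_n^{(alpha,beta)}(x;q) via the three-term recurrence
  (p_{-1} = 0, p_0 = 1, so p_1 = x).\<close>
fun pab :: "real \<Rightarrow> real \<Rightarrow> real \<Rightarrow> nat \<Rightarrow> real \<Rightarrow> real" where
  "pab \<alpha> \<beta> q 0 x = 1"
| "pab \<alpha> \<beta> q (Suc 0) x = x"
| "pab \<alpha> \<beta> q (Suc (Suc n)) x =
     x * pab \<alpha> \<beta> q (Suc n) x - gt \<alpha> \<beta> q n * gt \<alpha> \<beta> q (Suc n) * pab \<alpha> \<beta> q n x"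

definition is_orth_measure :: "real \<Rightarrow> real \<Rightarrow> real \<Rightarrow> real measure \<Rightarrow> bool" where
  "is_orth_measure \<alpha> \<beta> q \<mu> \<longleftrightarrow>
     prob_space \<mu> \<and> sets \<mu> = sets borel \<and>
     (\<forall>m n. integrable \<mu> (\<lambda>x. pab \<alpha> \<beta> q m x * pab \<alpha> \<beta> q n x) \<and>
       (\<integral>x. pab \<alpha> \<beta> q m x * pab \<alpha> \<beta> q n x \<partial>\<mu>) =
         (if m = n then (\<Prod>j<n. gt \<alpha> \<beta> q j * gt \<alpha> \<beta> q (Suc j)) else 0))"

text \<open>The discrete (atomic) part of a measure vanishes iff the measure has no atoms.\<close>
definition discrete_part_vanishes :: "real measure \<Rightarrow> bool" where
  "discrete_part_vanishes \<mu> \<longleftrightarrow> (\<forall>x. emeasure \<mu> {x} = 0)"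

end

theory Submission
  imports Defs
begin

lemma gt_props:
  fixes q \<alpha> \<beta> :: real
  assumes "0 < q" "q < 1" "\<alpha> < 1" "\<beta> < 1" "\<beta> \<le> \<alpha>"
  shows "0 < gt \<alpha> \<beta> q n \<and> gt \<alpha> \<beta> q n \<le> 1 \<and> gt \<alpha> \<beta> q n \<le> gt \<alpha> \<beta> q (Suc n)"
proof -
  define t where "t = q ^ n"
  have t0: "0 < t" and t1: "t \<le> 1" using assms by (auto simp: t_def power_le_one)
  define s where "s = q * t"
  have s0: "0 < s" and st: "s \<le> t" using assms t0 by (auto simp: s_def)
  have s1: "s \<le> 1" using st t1 by simp
  have pb: "0 < 1 - \<beta> * u" if "0 < u" "u \<le> 1" for u
  proof (cases "\<beta> \<le> 0")
    case True then show ?thesis using that mult_nonpos_nonneg[of \<beta> u] by linarith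
  next
    case False then have "\<beta> * u \<le> \<beta>" using that by (simp add: mult_left_le)
    then show ?thesis using assms by linarith
  qed
  have pa: "0 < 1 - \<alpha> * u" if "0 < u" "u \<le> 1" for u
  proof (cases "\<alpha> \<le> 0")
    case True then show ?thesis using that mult_nonpos_nonneg[of \<alpha> u] by linarith
  next
    case False then have "\<alpha> * u \<le> \<alpha>" using that by (simp add: mult_left_le)
    then show ?thesis using assms by linarith
  qed
  have g: "gt \<alpha> \<beta> q n = (1 - \<alpha> * t) / (1 - \<beta> * t)" by (simp add: gt_def t_def)
  have g1: "gt \<alpha> \<beta> q (Suc n) = (1 - \<alpha> * s) / (1 - \<beta> * s)" by (simp add: gt_def s_def t_def)
  have A: "0 < 1 - \<alpha> * t" "0 < 1 - \<beta> * t" "0 < 1 - \<alpha> * s" "0 < 1 - \<beta> * s"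
    using pa pb t0 t1 s0 s1 by auto
  have "\<beta> * t \<le> \<alpha> * t" using assms t0 by (simp add: mult_right_mono)
  hence c2: "gt \<alpha> \<beta> q n \<le> 1" using A g by simp
  have key: "(\<alpha> - \<beta>) * s \<le> (\<alpha> - \<beta>) * t" using assms st by (simp add: mult_left_mono)
  have "(1 - \<alpha> * t) * (1 - \<beta> * s) \<le> (1 - \<alpha> * s) * (1 - \<beta> * t)"
    using key by (simp add: algebra_simps)
  hence "(1 - \<alpha> * t) / (1 - \<beta> * t) \<le> (1 - \<alpha> * s) / (1 - \<beta> * s)"
    using A by (simp add: divide_simps)
  hence c3: "gt \<alpha> \<beta> q n \<le> gt \<alpha> \<beta> q (Suc n)" using g g1 by simp
  show ?thesis using c2 c3 A g by simp
qed


lemma energy: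
  fixes A p :: "nat \<Rightarrow> real" and x :: real
  assumes rec: "\<And>n. p (Suc (Suc n)) = x * p (Suc n) - A n * p n"
    and p0: "p 0 = 1" and p1: "p (Suc 0) = x"
    and Apos: "\<And>n. 0 < A n" and Amono: "\<And>n. A n \<le> A (Suc n)" and A1: "\<And>n. A n \<le> 1"
  shows "p n ^ 2 / (\<Prod>j<n. A j) + p (Suc n) ^ 2 / (\<Prod>j<Suc n. A j) \<ge> A 0 / (1 + \<bar>x\<bar>)"
proof -
  define N where "N n = (\<Prod>j<n. A j)" for n
  define H where "H n = p (Suc n) ^ 2 - x * p n * p (Suc n) + A n * p n ^ 2" for n
  have Npos: "0 < N n" for n unfolding N_def using Apos by (simp add: prod_pos)
  have NS: "N (Suc n) = N n * A n" for n by (simp add: N_def)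
  have Hrec: "H (Suc n) = A n * H n + (A (Suc n) - A n) * p (Suc n) ^ 2" for n
    unfolding H_def rec by (simp add: algebra_simps power2_eq_square)
  have Hlow: "H n \<ge> A 0 * N n" for n
  proof (induction n)
    case 0 then show ?case by (simp add: H_def N_def p0 p1 power2_eq_square)
  next
    case (Suc n)
    have "A n * (A 0 * N n) \<le> A n * H n" using Suc Apos[of n] by (simp add: mult_left_mono)
    moreover have "0 \<le> (A (Suc n) - A n) * p (Suc n) ^ 2" using Amono[of n] by simp
    ultimately show ?case using Hrec[of n] NS[of n] by (simp add: algebra_simps)
  qed
  have b1: "\<bar>x * p n * p (Suc n)\<bar> \<le> \<bar>x\<bar> * (p n ^ 2 + p (Suc n) ^ 2)"
  proof -
    have sq: "0 \<le> (\<bar>p n\<bar> - \<bar>p (Suc n)\<bar>) ^ 2" by simp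
    have "(\<bar>p n\<bar> - \<bar>p (Suc n)\<bar>) ^ 2 = p n ^ 2 + p (Suc n) ^ 2 - 2 * (\<bar>p n\<bar> * \<bar>p (Suc n)\<bar>)"
      by (simp add: power2_diff)
    moreover have "0 \<le> \<bar>p n\<bar> * \<bar>p (Suc n)\<bar>" by simp
    ultimately have "\<bar>p n * p (Suc n)\<bar> \<le> p n ^ 2 + p (Suc n) ^ 2"
      using sq unfolding abs_mult by linarith
    then show ?thesis by (simp add: abs_mult mult_left_mono mult.assoc)
  qed
  have b2: "A n * p n ^ 2 \<le> p n ^ 2" using A1[of n] Apos[of n] by (simp add: mult_left_le_one_le)
  have "H n \<le> (1 + \<bar>x\<bar>) * (p n ^ 2 + p (Suc n) ^ 2)"
  proof -
    have "- (x * p n * p (Suc n)) \<le> \<bar>x * p n * p (Suc n)\<bar>" by (rule abs_ge_minus_self)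
    moreover have "(1 + \<bar>x\<bar>) * (p n ^ 2 + p (Suc n) ^ 2) = p n ^ 2 + p (Suc n) ^ 2 + \<bar>x\<bar> * (p n ^ 2 + p (Suc n) ^ 2)"
      by (simp add: algebra_simps)
    ultimately show ?thesis using b1 b2 unfolding H_def by linarith
  qed
  with Hlow[of n] have E: "A 0 * N n \<le> (1 + \<bar>x\<bar>) * (p n ^ 2 + p (Suc n) ^ 2)" by linarith
  have "N (Suc n) \<le> N n" using NS[of n] A1[of n] Npos[of n] by (simp add: mult_left_le)
  hence "p (Suc n) ^ 2 / N n \<le> p (Suc n) ^ 2 / N (Suc n)"
    using Npos by (simp add: frac_le)
  moreover have "A 0 / (1 + \<bar>x\<bar>) \<le> (p n ^ 2 + p (Suc n) ^ 2) / N n"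
    using E Npos[of n] by (simp add: divide_simps mult.commute)
  ultimately show ?thesis unfolding N_def[symmetric] by (simp add: add_divide_distrib)
qed

lemma pair_sum:
  fixes T :: "nat \<Rightarrow> real"
  assumes "\<And>n. T n + T (Suc n) \<ge> d"
  shows "(\<Sum>n<2*M. T n) \<ge> real M * d"
proof (induction M)
  case 0 then show ?case by simp
next
  case (Suc M)
  have "(\<Sum>n<2*Suc M. T n) = (\<Sum>n<2*M. T n) + T (2*M) + T (Suc (2*M))"
    by simp
  then show ?case using Suc assms[of "2*M"] by (simp add: algebra_simps)
qed


theorem proposition2p13:
  fixes q \<alpha> \<beta> :: real and \<mu> :: "real measure"
  assumes "0 < q" "q < 1" "-1 < \<alpha>" "\<alpha> < 1" "\<beta> < 1"
    and "\<beta> \<le> \<alpha>"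
    and "is_orth_measure \<alpha> \<beta> q \<mu>"
  shows "discrete_part_vanishes \<mu>"
proof -
  have ps: "prob_space \<mu>" and sb: "sets \<mu> = sets borel"
    and orth: "\<And>m n. integrable \<mu> (\<lambda>x. pab \<alpha> \<beta> q m x * pab \<alpha> \<beta> q n x)"
    "\<And>m n. (\<integral>x. pab \<alpha> \<beta> q m x * pab \<alpha> \<beta> q n x \<partial>\<mu>) =
         (if m = n then (\<Prod>j<n. gt \<alpha> \<beta> q j * gt \<alpha> \<beta> q (Suc j)) else 0)"
    using assms(7) unfolding is_orth_measure_def by auto
  interpret prob_space \<mu> by (rule ps)
  have sp: "space \<mu> = UNIV" using sets_eq_imp_space_eq[OF sb] by simp
  define A where "A n = gt \<alpha> \<beta> q n * gt \<alpha> \<beta> q (Suc n)" for n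
  have G: "\<And>n. 0 < gt \<alpha> \<beta> q n \<and> gt \<alpha> \<beta> q n \<le> 1 \<and> gt \<alpha> \<beta> q n \<le> gt \<alpha> \<beta> q (Suc n)"
    using gt_props assms by blast
  have Apos: "0 < A n" for n using G[of n] G[of "Suc n"] by (simp add: A_def)
  have A1: "A n \<le> 1" for n using G[of n] G[of "Suc n"] unfolding A_def
    by (simp add: mult_le_one)
  have Amono: "A n \<le> A (Suc n)" for n using G[of n] G[of "Suc n"] G[of "Suc (Suc n)"]
    unfolding A_def by (intro mult_mono) auto
  define N where "N n = (\<Prod>j<n. A j)" for n
  have Npos: "0 < N n" for n unfolding N_def using Apos by (simp add: prod_pos)
  have orth2: "\<And>m n. (\<integral>x. pab \<alpha> \<beta> q m x * pab \<alpha> \<beta> q n x \<partial>\<mu>) = (if m = n then N n else 0)"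
    using orth(2) by (simp add: N_def A_def)
  show ?thesis unfolding discrete_part_vanishes_def
  proof (rule ccontr)
    assume "\<not> (\<forall>x. emeasure \<mu> {x} = 0)"
    then obtain x0 where nz: "emeasure \<mu> {x0} \<noteq> 0" by auto
    define w where "w = measure \<mu> {x0}"
    have x0s: "{x0} \<in> sets \<mu>" using sb by simp
    have wpos: "0 < w" using nz emeasure_eq_measure[of "{x0}"] unfolding w_def
      by (metis ennreal_0 measure_nonneg order_le_less)
    define p where "p n = pab \<alpha> \<beta> q n x0" for n
    define T where "T n = p n ^ 2 / N n" for n
    define d where "d = A 0 / (1 + \<bar>x0\<bar>)"
    have dpos: "0 < d" using Apos[of 0] by (simp add: d_def add_pos_nonneg)
    have pair: "T n + T (Suc n) \<ge> d" for n
      unfolding T_def d_def N_def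
    proof (rule energy)
      show "p (Suc (Suc n)) = x0 * p (Suc n) - A n * p n" for n by (simp add: p_def A_def)
    qed (auto simp: p_def Apos Amono A1)
    have bessel: "w * (\<Sum>n<K. T n) ^ 2 \<le> (\<Sum>n<K. T n)" for K
    proof -
      define c where "c n = p n / N n" for n
      define f where "f y = (\<Sum>n<K. c n * pab \<alpha> \<beta> q n y)" for y
      have f2: "f y ^ 2 = (\<Sum>m<K. \<Sum>n<K. c m * c n * (pab \<alpha> \<beta> q m y * pab \<alpha> \<beta> q n y))" for y
        unfolding f_def power2_eq_square sum_product by (simp add: algebra_simps)
      have intf: "integrable \<mu> (\<lambda>y. f y ^ 2)"
        unfolding f2 by (auto intro!: integrable_sum integrable_mult_right orth(1))
      have "(\<integral>y. f y ^ 2 \<partial>\<mu>) = (\<Sum>m<K. \<Sum>n<K. c m * c n * (if m = n then N n else 0))"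
        unfolding f2 by (simp add: integral_sum integrable_sum integrable_mult_right orth(1) orth2)
      also have "\<dots> = (\<Sum>n<K. c n * c n * N n)"
        by (simp add: if_distrib cong: if_cong)
      also have "\<dots> = (\<Sum>n<K. T n)"
        using Npos by (intro sum.cong) (auto simp: c_def T_def power2_eq_square)
      finally have I: "(\<integral>y. f y ^ 2 \<partial>\<mu>) = (\<Sum>n<K. T n)" .
      have fx0: "f x0 = (\<Sum>n<K. T n)"
        unfolding f_def using Npos by (intro sum.cong) (auto simp: c_def T_def p_def power2_eq_square)
      have "(\<integral>y. indicator {x0} y * f x0 ^ 2 \<partial>\<mu>) \<le> (\<integral>y. f y ^ 2 \<partial>\<mu>)"
        by (rule integral_mono'[OF intf]) (auto simp: indicator_def)
      moreover have "(\<integral>y. indicator {x0} y * f x0 ^ 2 \<partial>\<mu>) = w * f x0 ^ 2"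
        by (simp add: w_def sp)
      ultimately show ?thesis using I fx0 by (simp add: sp w_def)
    qed
    obtain M where M: "1 / (w * d) < real M" using reals_Archimedean2 by blast
    have S: "(\<Sum>n<2*M. T n) \<ge> real M * d" by (rule pair_sum) (rule pair)
    have Mpos: "0 < M" using M wpos dpos
      by (metis divide_pos_pos mult_pos_pos not_gr0 of_nat_0 zero_less_one order_less_asym)
    have "1 / w < real M * d" using M wpos dpos by (simp add: field_simps)
    hence Sbig: "1 / w < (\<Sum>n<2*M. T n)" using S by linarith
    have Spos: "0 < (\<Sum>n<2*M. T n)" using Sbig wpos by (simp add: less_trans[of 0 "1/w"])
    have "w * (\<Sum>n<2*M. T n) ^ 2 \<le> (\<Sum>n<2*M. T n)" by (rule bessel)
    hence "w * (\<Sum>n<2*M. T n) \<le> 1" using Spos by (simp add: power2_eq_square)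
    hence "(\<Sum>n<2*M. T n) \<le> 1 / w" using wpos by (simp add: field_simps)
    with Sbig show False by simp
  qed
qed

end
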